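(* In the right-angled Artin group $A(P_3)=\langle a,b,c\mid ab=ba,\ bc=cb\rangle$ we have \[\langle ab,c\rangle\cap\langle a,bc\rangle\cap\langle a,c\rangle=[\langle a,c\rangle,\langle a,c\rangle].\]
   Context: $[\langle a,c\rangle,\langle a,c\rangle]$ denotes the commutator (derived) subgroup of the subgroup $\langle a,c\rangle$. *)

theory Defs
  imports "HOL-Algebra.Algebra"
begin

type_synonym 'g letter = "'g \<times> bool"   (* (x, False) = x,  (x, True) = x^-1 *)
type_synonym 'g word = "'g letter list"

definition inv_letter :: "'g letter \<Rightarrow> 'g letter" where
  "inv_letter l = (fst l, \<not> snd l)"

inductive pres_rel :: "'g word set \<Rightarrow> 'g word \<Rightarrow> 'g word \<Rightarrow> bool" for R where
  pres_refl: "pres_rel R u u"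
| pres_sym: "pres_rel R u v \<Longrightarrow> pres_rel R v u"
| pres_trans: "pres_rel R u v \<Longrightarrow> pres_rel R v w \<Longrightarrow> pres_rel R u w"
| pres_cancel: "pres_rel R (u @ [x, inv_letter x] @ v) (u @ v)"
| pres_relator: "r \<in> R \<Longrightarrow> pres_rel R (u @ r @ v) (u @ v)"

definition pres_eqv :: "'g word set \<Rightarrow> ('g word \<times> 'g word) set" where
  "pres_eqv R = {(u, v). pres_rel R u v}"

definition presented_group :: "'g word set \<Rightarrow> 'g word set monoid" where
  "presented_group R =
     \<lparr>carrier = UNIV // pres_eqv R,
      monoid.mult = (\<lambda>x y. pres_eqv R `` {(SOME u. u \<in> x) @ (SOME v. v \<in> y)}),
      one = pres_eqv R `` {[]}\<rparr>"

definition pres_gen :: "'g word set \<Rightarrow> 'g \<Rightarrow> 'g word set" where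
  "pres_gen R x = pres_eqv R `` {[(x, False)]}"

datatype P3gen = Ga | Gb | Gc

definition P3_relators :: "P3gen word set" where
  "P3_relators = { [(Ga,False),(Gb,False),(Ga,True),(Gb,True)],
                   [(Gb,False),(Gc,False),(Gb,True),(Gc,True)] }"

definition AP3 :: "P3gen word set monoid" where
  "AP3 = presented_group P3_relators"

end

theory Submission
  imports Defs
begin


lemma pres_eqv_equiv: "equiv UNIV (pres_eqv R)"
  unfolding pres_eqv_def equiv_def refl_on_def sym_def trans_def
  by (auto intro: pres_rel.intros)

lemma pres_rel_cong: "pres_rel R u v \<Longrightarrow> pres_rel R (p @ u @ q) (p @ v @ q)"
proof (induction rule: pres_rel.induct)
  case (pres_refl u) then show ?case by (blast intro: pres_rel.intros)
next
  case (pres_sym u v) then show ?case by (blast intro: pres_rel.intros)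
next
  case (pres_trans u v w) then show ?case by (blast intro: pres_rel.intros)
next
  case (pres_cancel u x v)
  then show ?case using pres_rel.pres_cancel[of R "p @ u" x "v @ q"] by simp
next
  case (pres_relator r u v)
  then show ?case using pres_rel.pres_relator[of r R "p @ u" "v @ q"] by simp
qed

lemma pres_rel_app: "pres_rel R u u' \<Longrightarrow> pres_rel R v v' \<Longrightarrow> pres_rel R (u @ v) (u' @ v')"
  using pres_rel_cong[of R u u' "[]" v] pres_rel_cong[of R v v' u' "[]"]
  by (auto intro: pres_trans)

lemma class_eq_iff: "pres_eqv R `` {u} = pres_eqv R `` {v} \<longleftrightarrow> pres_rel R u v"
  using eq_equiv_class_iff[OF pres_eqv_equiv, of u v] by (simp add: pres_eqv_def)

lemma some_class: "pres_eqv R `` {(SOME v. v \<in> pres_eqv R `` {u})} = pres_eqv R `` {u}"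
proof -
  have "u \<in> pres_eqv R `` {u}" by (simp add: pres_eqv_def pres_refl)
  then have "(SOME v. v \<in> pres_eqv R `` {u}) \<in> pres_eqv R `` {u}" by (rule someI)
  then have "pres_rel R u (SOME v. v \<in> pres_eqv R `` {u})" by (simp add: pres_eqv_def)
  then show ?thesis using class_eq_iff pres_sym by metis
qed

lemma pg_mult: "pres_eqv R `` {u} \<otimes>\<^bsub>presented_group R\<^esub> pres_eqv R `` {v} = pres_eqv R `` {u @ v}"
proof -
  have 1: "pres_rel R (SOME w. w \<in> pres_eqv R `` {u}) u"
    using some_class[of R u] unfolding class_eq_iff .
  have 2: "pres_rel R (SOME w. w \<in> pres_eqv R `` {v}) v"
    using some_class[of R v] unfolding class_eq_iff .
  have "pres_eqv R `` {(SOME w. w \<in> pres_eqv R `` {u}) @ (SOME w. w \<in> pres_eqv R `` {v})} = pres_eqv R `` {u @ v}"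
    unfolding class_eq_iff by (rule pres_rel_app[OF 1 2])
  then show ?thesis unfolding presented_group_def by simp
qed

lemma pg_carrier: "carrier (presented_group R) = {pres_eqv R `` {u} | u. True}"
  unfolding presented_group_def by (auto simp: quotient_def)

lemma pg_one: "\<one>\<^bsub>presented_group R\<^esub> = pres_eqv R `` {[]}"
  unfolding presented_group_def by simp

lemma inv_letter_inv[simp]: "inv_letter (inv_letter x) = x"
  by (simp add: inv_letter_def)

lemma pres_inv_word: "pres_rel R (rev (map inv_letter u) @ u) []"
proof (induction u)
  case Nil then show ?case by (simp add: pres_refl)
next
  case (Cons x u)
  have "pres_rel R (rev (map inv_letter u) @ [inv_letter x, inv_letter (inv_letter x)] @ u) (rev (map inv_letter u) @ u)"
    by (rule pres_cancel)
  then show ?case using Cons by (auto intro: pres_trans)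
qed

lemma pg_carrierE:
  assumes "x \<in> carrier (presented_group R)" obtains u where "x = pres_eqv R `` {u}"
  using assms unfolding pg_carrier by blast

lemma pg_carrierI: "pres_eqv R `` {u} \<in> carrier (presented_group R)"
  unfolding pg_carrier by blast

lemma pg_group: "group (presented_group R)"
proof (rule groupI)
  fix x y assume "x \<in> carrier (presented_group R)" "y \<in> carrier (presented_group R)"
  then show "x \<otimes>\<^bsub>presented_group R\<^esub> y \<in> carrier (presented_group R)"
    by (metis pg_carrierE pg_carrierI pg_mult)
next
  show "\<one>\<^bsub>presented_group R\<^esub> \<in> carrier (presented_group R)" by (simp only: pg_one pg_carrierI)
next
  fix x y z assume "x \<in> carrier (presented_group R)" "y \<in> carrier (presented_group R)"
    "z \<in> carrier (presented_group R)"
  then show "x \<otimes>\<^bsub>presented_group R\<^esub> y \<otimes>\<^bsub>presented_group R\<^esub> z =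
       x \<otimes>\<^bsub>presented_group R\<^esub> (y \<otimes>\<^bsub>presented_group R\<^esub> z)"
    by (metis pg_carrierE pg_mult append_assoc)
next
  fix x assume "x \<in> carrier (presented_group R)"
  then show "\<one>\<^bsub>presented_group R\<^esub> \<otimes>\<^bsub>presented_group R\<^esub> x = x"
    by (metis pg_carrierE pg_mult pg_one append_Nil)
next
  fix x assume "x \<in> carrier (presented_group R)"
  then obtain u where u: "x = pres_eqv R `` {u}" by (rule pg_carrierE)
  have "pres_eqv R `` {rev (map inv_letter u)} \<otimes>\<^bsub>presented_group R\<^esub> x = \<one>\<^bsub>presented_group R\<^esub>"
    unfolding u pg_mult pg_one class_eq_iff by (rule pres_inv_word)
  then show "\<exists>y\<in>carrier (presented_group R). y \<otimes>\<^bsub>presented_group R\<^esub> x = \<one>\<^bsub>presented_group R\<^esub>"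
    using pg_carrierI by blast
qed

definition expo :: "'g \<Rightarrow> 'g word \<Rightarrow> int" where
  "expo g w = sum_list (map (\<lambda>l. if fst l = g then (if snd l then -1 else 1) else 0) w)"

lemma expo_append[simp]: "expo g (u @ v) = expo g u + expo g v"
  by (simp add: expo_def)

lemma expo_invariant:
  assumes "\<And>r. r \<in> R \<Longrightarrow> expo g r = 0"
  shows "pres_rel R u v \<Longrightarrow> expo g u = expo g v"
proof (induction rule: pres_rel.induct)
  case (pres_cancel u x v)
  show ?case by (simp add: expo_def inv_letter_def)
qed (simp_all add: assms)

definition Exs :: "'g \<Rightarrow> 'g word set \<Rightarrow> int" where
  "Exs g S = expo g (SOME w. w \<in> S)"

lemma Ex_class:
  assumes "\<And>r. r \<in> R \<Longrightarrow> expo g r = 0"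
  shows "Exs g (pres_eqv R `` {u}) = expo g u"
proof -
  have "u \<in> pres_eqv R `` {u}" by (simp add: pres_eqv_def pres_refl)
  then have "(SOME v. v \<in> pres_eqv R `` {u}) \<in> pres_eqv R `` {u}" by (rule someI)
  then have "pres_rel R u (SOME v. v \<in> pres_eqv R `` {u})" by (simp add: pres_eqv_def)
  then show ?thesis unfolding Exs_def using expo_invariant[OF assms] by metis
qed

lemma Ex_mult:
  assumes "\<And>r. r \<in> R \<Longrightarrow> expo g r = 0"
    and "x \<in> carrier (presented_group R)" "y \<in> carrier (presented_group R)"
  shows "Exs g (x \<otimes>\<^bsub>presented_group R\<^esub> y) = Exs g x + Exs g y"
  using assms(2,3) by (metis pg_carrierE pg_mult Ex_class[OF assms(1)] expo_append)



context group
begin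

lemma lcanc[simp]: "x \<in> carrier G \<Longrightarrow> y \<in> carrier G \<Longrightarrow> x \<otimes> (inv x \<otimes> y) = y"
  by (simp add: m_assoc[symmetric])
lemma lcanc2[simp]: "x \<in> carrier G \<Longrightarrow> y \<in> carrier G \<Longrightarrow> inv x \<otimes> (x \<otimes> y) = y"
  by (simp add: m_assoc[symmetric])

definition ishom :: "('a \<Rightarrow> int) \<Rightarrow> bool" where
  "ishom f \<longleftrightarrow> (\<forall>x\<in>carrier G. \<forall>y\<in>carrier G. f (x \<otimes> y) = f x + f y)"

lemma ishomD: "ishom f \<Longrightarrow> x \<in> carrier G \<Longrightarrow> y \<in> carrier G \<Longrightarrow> f (x \<otimes> y) = f x + f y"
  unfolding ishom_def by blast

lemma hom_one: assumes "ishom f" shows "f \<one> = 0"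
  using ishomD[OF assms, of \<one> \<one>] by simp

lemma hom_inv: assumes "ishom f" "x \<in> carrier G" shows "f (inv x) = - f x"
  using ishomD[OF assms(1), of x "inv x"] assms hom_one[OF assms(1)] by simp

lemma hom_agree:
  assumes "S \<subseteq> carrier G" "ishom f" "ishom g" "\<And>s. s \<in> S \<Longrightarrow> f s = g s"
    and "x \<in> generate G S"
  shows "f x = g x"
  using assms(5)
proof (induction rule: generate.induct)
  case one then show ?case using hom_one[OF assms(2)] hom_one[OF assms(3)] by simp
next
  case (incl h) then show ?case using assms by simp
next
  case (inv h)
  then have "h \<in> carrier G" using assms(1) by auto
  then show ?case using inv assms(4) hom_inv[OF assms(2)] hom_inv[OF assms(3)] by simp
next
  case (eng h1 h2)
  have "h1 \<in> carrier G" "h2 \<in> carrier G" using eng.hyps generate_incl[OF assms(1)] by auto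
  then show ?case using eng.IH ishomD[OF assms(2)] ishomD[OF assms(3)] by simp
qed

lemma zero_hom: "ishom (\<lambda>_. 0)" unfolding ishom_def by simp

lemma hom_derived:
  assumes "H \<subseteq> carrier G" "ishom f" "x \<in> derived G H"
  shows "f x = 0"
proof -
  have "f x = (\<lambda>_. 0) x"
    apply (rule hom_agree[OF derived_set_in_carrier[OF assms(1)] assms(2) zero_hom])
    using assms(3) unfolding derived_def
     apply (auto)
    subgoal for h1 h2
      using assms(1) ishomD[OF assms(2)] hom_inv[OF assms(2)] by (auto simp: subset_iff)
    done
  then show ?thesis by simp
qed

lemma hom_nat_pow: assumes "ishom f" "x \<in> carrier G" shows "f (x [^] (n::nat)) = int n * f x"
  by (induction n) (auto simp: assms hom_one ishomD[OF assms(1)] algebra_simps)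

lemma hom_int_pow': assumes "ishom f" "x \<in> carrier G" shows "f (x [^] (i::int)) = i * f x"
proof (cases "i \<ge> 0")
  case True
  then obtain n where "i = int n" by (metis nonneg_int_cases)
  then show ?thesis using hom_nat_pow[OF assms, of n] int_pow_int[of G x n] by simp
next
  case False
  then obtain n where "i = - int n" by (metis neg_int_cases le_less linorder_not_le)
  then show ?thesis using hom_nat_pow[OF assms, of n] int_pow_neg_int[OF assms(2), of n] hom_inv[OF assms(1) nat_pow_closed[OF assms(2)], of n] by simp
qed

end



context group
begin

lemma comm_in_derived:
  assumes "x \<in> H" "y \<in> H"
  shows "x \<otimes> y \<otimes> inv x \<otimes> inv y \<in> derived G H"
  unfolding derived_def using assms by (blast intro: generate.incl)

lemma derived_normal_in:
  assumes "subgroup H G" "h \<in> H" "d \<in> derived G H"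
  shows "h \<otimes> d \<otimes> inv h \<in> derived G H"
proof -
  have sD: "subgroup (derived G H) G" by (rule derived_is_subgroup[OF subgroup.subset[OF assms(1)]])
  have DH: "derived G H \<subseteq> H" by (rule derived_incl[OF subset_refl assms(1)])
  have hc: "h \<in> carrier G" using assms subgroup.subset by blast
  have dc: "d \<in> carrier G" using DH assms(1,3) subgroup.subset by blast
  have "h \<otimes> d \<otimes> inv h = (h \<otimes> d \<otimes> inv h \<otimes> inv d) \<otimes> d"
    using hc dc by (simp add: m_assoc)
  moreover have "h \<otimes> d \<otimes> inv h \<otimes> inv d \<in> derived G H"
    using comm_in_derived assms DH by blast
  ultimately show ?thesis using subgroup.m_closed[OF sD, of "h \<otimes> d \<otimes> inv h \<otimes> inv d" d] assms(3) by argo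
qed

definition cg :: "'a set \<Rightarrow> 'a \<Rightarrow> 'a \<Rightarrow> bool" where
  "cg H x y \<longleftrightarrow> x \<otimes> inv y \<in> derived G H"

lemma cg_refl: "subgroup H G \<Longrightarrow> x \<in> H \<Longrightarrow> cg H x x"
proof -
  assume "subgroup H G" "x \<in> H"
  then have "x \<in> carrier G" using subgroup.subset by blast
  then have "x \<otimes> inv x = \<one>" by simp
  then show ?thesis unfolding cg_def derived_def using generate.one by metis
qed

lemma cg_trans:
  assumes "subgroup H G" "x \<in> H" "y \<in> H" "z \<in> H" "cg H x y" "cg H y z"
  shows "cg H x z"
proof -
  have sD: "subgroup (derived G H) G" by (rule derived_is_subgroup[OF subgroup.subset[OF assms(1)]])
  have c: "x \<in> carrier G" "y \<in> carrier G" "z \<in> carrier G" using assms subgroup.subset by auto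
  have "x \<otimes> inv z = (x \<otimes> inv y) \<otimes> (y \<otimes> inv z)" using c by (simp add: m_assoc)
  then show ?thesis using assms(5,6) subgroup.m_closed[OF sD] unfolding cg_def by metis
qed

lemma cg_mult:
  assumes "subgroup H G" "x1 \<in> H" "y1 \<in> H" "x2 \<in> H" "y2 \<in> H" "cg H x1 y1" "cg H x2 y2"
  shows "cg H (x1 \<otimes> x2) (y1 \<otimes> y2)"
proof -
  have sD: "subgroup (derived G H) G" by (rule derived_is_subgroup[OF subgroup.subset[OF assms(1)]])
  have c: "x1 \<in> carrier G" "y1 \<in> carrier G" "x2 \<in> carrier G" "y2 \<in> carrier G"
    using assms subgroup.subset by auto
  have "x1 \<otimes> x2 \<otimes> inv (y1 \<otimes> y2) = (x1 \<otimes> (x2 \<otimes> inv y2) \<otimes> inv x1) \<otimes> (x1 \<otimes> inv y1)"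
    using c by (simp add: m_assoc inv_mult_group)
  moreover have "x1 \<otimes> (x2 \<otimes> inv y2) \<otimes> inv x1 \<in> derived G H"
    using derived_normal_in[OF assms(1,2)] assms(7) unfolding cg_def by blast
  ultimately show ?thesis using assms(6) subgroup.m_closed[OF sD] unfolding cg_def by metis
qed

lemma cg_comm:
  assumes "x \<in> H" "y \<in> H" "H \<subseteq> carrier G"
  shows "cg H (x \<otimes> y) (y \<otimes> x)"
proof -
  have c: "x \<in> carrier G" "y \<in> carrier G" using assms by auto
  have "x \<otimes> y \<otimes> inv (y \<otimes> x) = x \<otimes> y \<otimes> inv x \<otimes> inv y"
    using c by (simp add: m_assoc inv_mult_group)
  then show ?thesis using comm_in_derived[OF assms(1,2)] unfolding cg_def by metis
qed

lemma comm_subgroup: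
  assumes "h \<in> carrier G"
  shows "subgroup {z \<in> carrier G. z \<otimes> h = h \<otimes> z} G"
proof (rule subgroup.intro)
  fix x y assume "x \<in> {z \<in> carrier G. z \<otimes> h = h \<otimes> z}" "y \<in> {z \<in> carrier G. z \<otimes> h = h \<otimes> z}"
  then have xc: "x \<in> carrier G" "y \<in> carrier G" and e: "x \<otimes> h = h \<otimes> x" "y \<otimes> h = h \<otimes> y" by auto
  have "x \<otimes> y \<otimes> h = x \<otimes> (h \<otimes> y)" using xc assms by (simp add: m_assoc e)
  also have "\<dots> = (x \<otimes> h) \<otimes> y" using xc assms by (simp add: m_assoc)
  also have "\<dots> = h \<otimes> (x \<otimes> y)" using xc assms by (simp add: m_assoc e)
  finally show "x \<otimes> y \<in> {z \<in> carrier G. z \<otimes> h = h \<otimes> z}" using xc by simp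
next
  fix x assume x: "x \<in> {z \<in> carrier G. z \<otimes> h = h \<otimes> z}"
  then have xc: "x \<in> carrier G" and e: "x \<otimes> h = h \<otimes> x" by auto
  have "inv x \<otimes> h = inv x \<otimes> (h \<otimes> x) \<otimes> inv x" using xc assms by (simp add: m_assoc)
  also have "\<dots> = h \<otimes> inv x" using xc assms by (simp add: e[symmetric] m_assoc)
  finally show "inv x \<in> {z \<in> carrier G. z \<otimes> h = h \<otimes> z}" using xc by simp
qed (use assms in auto)

lemma pow_comm:
  assumes "z \<in> carrier G" "h \<in> carrier G" "z \<otimes> h = h \<otimes> z"
  shows "z [^] (k::int) \<otimes> h = h \<otimes> z [^] k"
  using subgroup_int_pow_closed[OF comm_subgroup[OF assms(2)], of z k] assms by auto

end



locale p3setting = group G for G (structure) +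
  fixes a b c ea eb ec
  assumes abc: "a \<in> carrier G" "b \<in> carrier G" "c \<in> carrier G"
    and ab: "a \<otimes> b = b \<otimes> a" and bc: "b \<otimes> c = c \<otimes> b"
    and homs: "ishom ea" "ishom eb" "ishom ec"
    and vals: "ea a = 1" "ea b = 0" "ea c = 0" "eb a = 0" "eb b = 1" "eb c = 0"
       "ec a = 0" "ec b = 0" "ec c = 1"
begin

abbreviation "HH \<equiv> generate G {a, c}"

lemma HH_sub: "subgroup HH G" using generate_is_subgroup abc by auto

lemma HH_carrier: "HH \<subseteq> carrier G" using subgroup.subset[OF HH_sub] .

lemma b_comm_HH: "h \<in> HH \<Longrightarrow> h \<otimes> b = b \<otimes> h"
proof -
  assume h: "h \<in> HH"
  have "HH \<subseteq> {z \<in> carrier G. z \<otimes> b = b \<otimes> z}"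
    apply (rule generate_subgroup_incl[OF _ comm_subgroup[OF abc(2)]])
    using abc ab bc by auto
  then show ?thesis using h by auto
qed

lemma bpow_comm_HH: "h \<in> HH \<Longrightarrow> b [^] (k::int) \<otimes> h = h \<otimes> b [^] k"
  using pow_comm[OF abc(2), of h k] b_comm_HH HH_carrier by auto

lemma L4: "x \<in> HH \<Longrightarrow> \<exists>i j. cg HH x (a [^] (i::int) \<otimes> c [^] (j::int))"
proof (induction rule: generate.induct)
  case one
  show ?case apply (rule exI[of _ 0], rule exI[of _ 0])
    using cg_refl[OF HH_sub generate.one] abc by simp
next
  case (incl h)
  then show ?case
  proof
    assume "h = a" then show ?thesis apply - apply (rule exI[of _ 1], rule exI[of _ 0])
      using cg_refl[OF HH_sub generate.incl[of a]] abc by simp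
  next
    assume "h \<in> {c}" then show ?thesis apply - apply (rule exI[of _ 0], rule exI[of _ 1])
      using cg_refl[OF HH_sub generate.incl[of c]] abc by simp
  qed
next
  case (inv h)
  then show ?case
  proof
    assume "h = a" then show ?thesis apply - apply (rule exI[of _ "-1"], rule exI[of _ 0])
      using cg_refl[OF HH_sub generate.inv[of a]] abc int_pow_neg[of a 1] by simp
  next
    assume "h \<in> {c}" then show ?thesis apply - apply (rule exI[of _ 0], rule exI[of _ "-1"])
      using cg_refl[OF HH_sub generate.inv[of c]] abc int_pow_neg[of c 1] by simp
  qed
next
  case (eng h1 h2)
  from eng.IH obtain i j k l :: int where
    c1: "cg HH h1 (a [^] i \<otimes> c [^] j)" and c2: "cg HH h2 (a [^] k \<otimes> c [^] l)" by blast
  have aH: "a \<in> HH" and cH: "c \<in> HH" by (auto intro: generate.incl)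
  have pw: "a [^] (n::int) \<in> HH" "c [^] (n::int) \<in> HH" for n
    using subgroup_int_pow_closed[OF HH_sub aH] subgroup_int_pow_closed[OF HH_sub cH] by auto
  note mc = subgroup.m_closed[OF HH_sub]
  have pc: "a [^] (n::int) \<in> carrier G" "c [^] (n::int) \<in> carrier G" for n using abc by auto
  have s1: "cg HH (h1 \<otimes> h2) ((a [^] i \<otimes> c [^] j) \<otimes> (a [^] k \<otimes> c [^] l))"
    by (rule cg_mult[OF HH_sub eng.hyps(1) _ eng.hyps(2) _ c1 c2]) (auto intro: mc pw)
  have e1: "(a [^] i \<otimes> c [^] j) \<otimes> (a [^] k \<otimes> c [^] l) = (a [^] i \<otimes> (c [^] j \<otimes> a [^] k)) \<otimes> c [^] l"
    using pc by (simp add: m_assoc)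
  have e2: "(a [^] i \<otimes> (a [^] k \<otimes> c [^] j)) \<otimes> c [^] l = a [^] (i + k) \<otimes> c [^] (j + l)"
    using pc abc by (simp add: m_assoc int_pow_mult)
  have s2: "cg HH ((a [^] i \<otimes> (c [^] j \<otimes> a [^] k)) \<otimes> c [^] l) ((a [^] i \<otimes> (a [^] k \<otimes> c [^] j)) \<otimes> c [^] l)"
    apply (rule cg_mult[OF HH_sub _ _ pw(2) pw(2) _ cg_refl[OF HH_sub pw(2)]])
      apply (auto intro!: mc pw)
    apply (rule cg_mult[OF HH_sub pw(1) pw(1) _ _ cg_refl[OF HH_sub pw(1)]])
      apply (auto intro!: mc pw cg_comm HH_carrier)
    done
  have "cg HH (h1 \<otimes> h2) (a [^] (i + k) \<otimes> c [^] (j + l))"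
    apply (rule cg_trans[OF HH_sub _ _ _ s1])
       apply (auto intro!: mc pw eng.hyps)
    using s2 e1 e2 by simp
  then show ?case by blast
qed

end



context group
begin

lemma comm_a:
  assumes "x \<in> carrier G" "y \<in> carrier G" "z \<in> carrier G" "z \<otimes> y = y \<otimes> z"
  shows "(x \<otimes> z) \<otimes> y \<otimes> inv (x \<otimes> z) \<otimes> inv y = x \<otimes> y \<otimes> inv x \<otimes> inv y"
proof -
  have e: "z \<otimes> (y \<otimes> r) = y \<otimes> (z \<otimes> r)" if "r \<in> carrier G" for r
    using assms that by (simp add: m_assoc[symmetric])
  show ?thesis using assms by (simp add: m_assoc inv_mult_group e)
qed

lemma comm_b:
  assumes "x \<in> carrier G" "y \<in> carrier G" "z \<in> carrier G" "z \<otimes> inv x = inv x \<otimes> z"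
  shows "x \<otimes> (y \<otimes> z) \<otimes> inv x \<otimes> inv (y \<otimes> z) = x \<otimes> y \<otimes> inv x \<otimes> inv y"
proof -
  have e: "z \<otimes> (inv x \<otimes> r) = inv x \<otimes> (z \<otimes> r)" if "r \<in> carrier G" for r
    using assms that by (simp add: m_assoc[symmetric])
  show ?thesis using assms by (simp add: m_assoc inv_mult_group e)
qed

end

context p3setting
begin

lemma lift:
  assumes K: "subgroup K G" and gens: "\<And>s. s \<in> {a, c} \<Longrightarrow> \<exists>k::int. s \<otimes> b [^] k \<in> K"
  shows "h \<in> HH \<Longrightarrow> \<exists>k::int. h \<otimes> b [^] k \<in> K"
proof (induction rule: generate.induct)
  case one
  have "\<one> \<otimes> b [^] (0::int) \<in> K" using subgroup.one_closed[OF K] by simp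
  then show ?case by blast
next
  case (incl h) then show ?case using gens by blast
next
  case (inv h)
  then obtain k :: int where k: "h \<otimes> b [^] k \<in> K" using gens by blast
  have hc: "h \<in> carrier G" using inv abc by auto
  have hH: "inv h \<in> HH" using inv by (rule generate.inv)
  have "inv (h \<otimes> b [^] k) = inv (b [^] k) \<otimes> inv h" using hc abc by (simp add: inv_mult_group)
  also have "\<dots> = b [^] (-k) \<otimes> inv h" using abc int_pow_neg by simp
  also have "\<dots> = inv h \<otimes> b [^] (-k)" using bpow_comm_HH[OF hH] .
  finally have "inv h \<otimes> b [^] (-k) \<in> K" using subgroup.m_inv_closed[OF K k] by simp
  then show ?case by blast
next
  case (eng h1 h2)
  from eng.IH obtain k m :: int where k: "h1 \<otimes> b [^] k \<in> K" and m: "h2 \<otimes> b [^] m \<in> K" by blast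
  have hc: "h1 \<in> carrier G" "h2 \<in> carrier G" using eng.hyps HH_carrier by auto
  have "(h1 \<otimes> b [^] k) \<otimes> (h2 \<otimes> b [^] m) = h1 \<otimes> (b [^] k \<otimes> h2) \<otimes> b [^] m"
    using hc abc by (simp add: m_assoc)
  also have "\<dots> = h1 \<otimes> (h2 \<otimes> b [^] k) \<otimes> b [^] m" using bpow_comm_HH[OF eng.hyps(2)] by simp
  also have "\<dots> = (h1 \<otimes> h2) \<otimes> b [^] (k + m)" using hc abc by (simp add: m_assoc int_pow_mult)
  finally have "(h1 \<otimes> h2) \<otimes> b [^] (k + m) \<in> K" using subgroup.m_closed[OF K k m] by simp
  then show ?case by blast
qed

lemma derived_sub:
  assumes K: "subgroup K G" and gens: "\<And>s. s \<in> {a, c} \<Longrightarrow> \<exists>k::int. s \<otimes> b [^] k \<in> K"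
  shows "derived G HH \<subseteq> K"
  unfolding derived_def
proof (rule generate_subgroup_incl[OF _ K], safe)
  fix h1 h2 assume h: "h1 \<in> HH" "h2 \<in> HH"
  obtain k :: int where k: "h1 \<otimes> b [^] k \<in> K" using lift[OF K gens h(1)] by blast
  obtain m :: int where m: "h2 \<otimes> b [^] m \<in> K" using lift[OF K gens h(2)] by blast
  have hc: "h1 \<in> carrier G" "h2 \<in> carrier G" "inv h1 \<in> HH" using h HH_carrier subgroup.m_inv_closed[OF HH_sub] by auto
  have pc: "b [^] (n::int) \<in> carrier G" for n using abc by simp
  have c1: "b [^] k \<otimes> (h2 \<otimes> b [^] m) = (h2 \<otimes> b [^] m) \<otimes> b [^] k"
  proof -
    have "b [^] k \<otimes> (h2 \<otimes> b [^] m) = (b [^] k \<otimes> h2) \<otimes> b [^] m" using hc pc by (simp add: m_assoc)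
    also have "\<dots> = h2 \<otimes> (b [^] k \<otimes> b [^] m)" using bpow_comm_HH[OF h(2)] hc pc by (simp add: m_assoc)
    also have "\<dots> = h2 \<otimes> (b [^] m \<otimes> b [^] k)" using abc by (simp add: int_pow_mult[symmetric] add.commute)
    finally show ?thesis using hc pc by (simp add: m_assoc)
  qed
  have "(h1 \<otimes> b [^] k) \<otimes> (h2 \<otimes> b [^] m) \<otimes> inv (h1 \<otimes> b [^] k) \<otimes> inv (h2 \<otimes> b [^] m)
        = h1 \<otimes> (h2 \<otimes> b [^] m) \<otimes> inv h1 \<otimes> inv (h2 \<otimes> b [^] m)"
    by (rule comm_a) (use hc pc c1 in auto)
  also have "\<dots> = h1 \<otimes> h2 \<otimes> inv h1 \<otimes> inv h2"
    by (rule comm_b) (use hc pc bpow_comm_HH[OF hc(3)] in auto)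
  finally have eq: "(h1 \<otimes> b [^] k) \<otimes> (h2 \<otimes> b [^] m) \<otimes> inv (h1 \<otimes> b [^] k) \<otimes> inv (h2 \<otimes> b [^] m)
        = h1 \<otimes> h2 \<otimes> inv h1 \<otimes> inv h2" .
  have "(h1 \<otimes> b [^] k) \<otimes> (h2 \<otimes> b [^] m) \<otimes> inv (h1 \<otimes> b [^] k) \<otimes> inv (h2 \<otimes> b [^] m) \<in> K"
    using k m subgroup.m_closed[OF K] subgroup.m_inv_closed[OF K] by meson
  then show "h1 \<otimes> h2 \<otimes> inv h1 \<otimes> inv h2 \<in> K" using eq by simp
qed

end



context p3setting
begin

lemma main_abstract:
  "generate G {a \<otimes> b, c} \<inter> generate G {a, b \<otimes> c} \<inter> HH = derived G HH"
proof
  have abC: "a \<otimes> b \<in> carrier G" "b \<otimes> c \<in> carrier G" using abc by auto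
  have K1: "subgroup (generate G {a \<otimes> b, c}) G" using generate_is_subgroup abc abC by auto
  have K2: "subgroup (generate G {a, b \<otimes> c}) G" using generate_is_subgroup abc abC by auto
  show "derived G HH \<subseteq> generate G {a \<otimes> b, c} \<inter> generate G {a, b \<otimes> c} \<inter> HH"
  proof (intro Int_greatest)
    show "derived G HH \<subseteq> generate G {a \<otimes> b, c}"
    proof (rule derived_sub[OF K1])
      fix s assume "s \<in> {a, c}"
      then show "\<exists>k::int. s \<otimes> b [^] k \<in> generate G {a \<otimes> b, c}"
      proof
        assume "s = a" then show ?thesis using abc
          by (intro exI[of _ 1]) (auto intro: generate.incl)
      next
        assume "s \<in> {c}" then show ?thesis using abc
          by (intro exI[of _ 0]) (auto intro: generate.incl)
      qed
    qed
    show "derived G HH \<subseteq> generate G {a, b \<otimes> c}"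
    proof (rule derived_sub[OF K2])
      fix s assume "s \<in> {a, c}"
      then show "\<exists>k::int. s \<otimes> b [^] k \<in> generate G {a, b \<otimes> c}"
      proof
        assume "s = a" then show ?thesis using abc
          by (intro exI[of _ 0]) (auto intro: generate.incl)
      next
        assume "s \<in> {c}" then show ?thesis using abc bc
          by (intro exI[of _ 1]) (auto intro: generate.incl)
      qed
    qed
    show "derived G HH \<subseteq> HH" by (rule derived_incl[OF subset_refl HH_sub])
  qed
next
  show "generate G {a \<otimes> b, c} \<inter> generate G {a, b \<otimes> c} \<inter> HH \<subseteq> derived G HH"
  proof
    fix x assume x: "x \<in> generate G {a \<otimes> b, c} \<inter> generate G {a, b \<otimes> c} \<inter> HH"
    have abC: "a \<otimes> b \<in> carrier G" "b \<otimes> c \<in> carrier G" using abc by auto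
    have xc: "x \<in> carrier G" using x HH_carrier by auto
    have e1: "eb x = ea x"
      by (rule hom_agree[of "{a \<otimes> b, c}"]) (use x abc abC homs vals ishomD[OF homs(1)] ishomD[OF homs(2)] in auto)
    have e2: "eb x = ec x"
      by (rule hom_agree[of "{a, b \<otimes> c}"]) (use x abc abC homs vals ishomD[OF homs(3)] ishomD[OF homs(2)] in auto)
    have e3: "eb x = (\<lambda>_. 0) x"
      by (rule hom_agree[of "{a, c}"]) (use x abc homs vals zero_hom in auto)
    obtain i j :: int where ij: "cg HH x (a [^] i \<otimes> c [^] j)" using L4 x by blast
    define p where "p = a [^] i \<otimes> c [^] j"
    have pc: "p \<in> carrier G" unfolding p_def using abc by auto
    have dD: "x \<otimes> inv p \<in> derived G HH" using ij unfolding cg_def p_def .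
    have "ea (x \<otimes> inv p) = 0" by (rule hom_derived[OF HH_carrier homs(1) dD])
    then have "ea x = ea p" using ishomD[OF homs(1) xc] hom_inv[OF homs(1) pc] pc by simp
    moreover have "ea p = i" unfolding p_def using ishomD[OF homs(1)] hom_int_pow'[OF homs(1)] abc vals by simp
    ultimately have i0: "i = 0" using e1 e3 by simp
    have "ec (x \<otimes> inv p) = 0" by (rule hom_derived[OF HH_carrier homs(3) dD])
    then have "ec x = ec p" using ishomD[OF homs(3) xc] hom_inv[OF homs(3) pc] pc by simp
    moreover have "ec p = j" unfolding p_def using ishomD[OF homs(3)] hom_int_pow'[OF homs(3)] abc vals by simp
    ultimately have j0: "j = 0" using e2 e3 by simp
    have "p = \<one>" unfolding p_def i0 j0 by simp
    then show "x \<in> derived G HH" using dD xc by simp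
  qed
qed

end



lemma swap_word:
  assumes "[(x,False),(y,False),(x,True),(y,True)] \<in> R"
  shows "pres_rel R [(x,False),(y,False)] [(y,False),(x,False)]"
proof -
  have 1: "pres_rel R ([(x,False),(y,False),(x,True),(y,True)] @ [(y,False),(x,False)]) [(y,False),(x,False)]"
    using pres_relator[OF assms, of "[]" "[(y,False),(x,False)]"] by simp
  have 2: "pres_rel R ([(x,False),(y,False),(x,True)] @ [(y,True), inv_letter (y,True)] @ [(x,False)])
            ([(x,False),(y,False),(x,True)] @ [(x,False)])"
    by (rule pres_cancel)
  have 3: "pres_rel R ([(x,False),(y,False)] @ [(x,True), inv_letter (x,True)] @ [])
            ([(x,False),(y,False)] @ [])"
    by (rule pres_cancel)
  have h1: "pres_rel R [(x,False),(y,False),(x,True),(y,True),(y,False),(x,False)] [(y,False),(x,False)]"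
    using 1 by simp
  have h2: "pres_rel R [(x,False),(y,False),(x,True),(y,True),(y,False),(x,False)] [(x,False),(y,False),(x,True),(x,False)]"
    using 2 by (simp add: inv_letter_def)
  have h3: "pres_rel R [(x,False),(y,False),(x,True),(x,False)] [(x,False),(y,False)]"
    using 3 by (simp add: inv_letter_def)
  show ?thesis by (rule pres_trans[OF pres_sym[OF h3] pres_trans[OF pres_sym[OF h2] h1]])
qed

lemma rel_expo: "r \<in> P3_relators \<Longrightarrow> expo g r = 0"
  unfolding P3_relators_def by (cases g) (auto simp: expo_def)

lemma AP3_ishom: "group.ishom AP3 (Exs g)"
  unfolding group.ishom_def[OF pg_group[of P3_relators, folded AP3_def]]
  unfolding AP3_def by (intro ballI Ex_mult rel_expo)

lemma exs: "Exs g (pres_gen P3_relators h) = (if g = h then 1 else 0)"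
proof -
  have "Exs g (pres_eqv P3_relators `` {[(h, False)]}) = expo g [(h,False)]"
    by (rule Ex_class) (rule rel_expo)
  then show ?thesis unfolding pres_gen_def by (simp add: expo_def)
qed

theorem mainTheorem12:
  fixes a b c :: "P3gen word set"
  defines "a \<equiv> pres_gen P3_relators Ga"
      and "b \<equiv> pres_gen P3_relators Gb"
      and "c \<equiv> pres_gen P3_relators Gc"
  shows "generate AP3 {a \<otimes>\<^bsub>AP3\<^esub> b, c} \<inter> generate AP3 {a, b \<otimes>\<^bsub>AP3\<^esub> c} \<inter> generate AP3 {a, c}
           = derived AP3 (generate AP3 {a, c})"
proof -
  have grp: "group AP3" unfolding AP3_def by (rule pg_group)
  interpret p3setting AP3 a b c "Exs Ga" "Exs Gb" "Exs Gc"
  proof (rule p3setting.intro[OF grp], rule p3setting_axioms.intro)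
    show "a \<in> carrier AP3" "b \<in> carrier AP3" "c \<in> carrier AP3"
      unfolding a_def b_def c_def pres_gen_def AP3_def by (rule pg_carrierI)+
    show "a \<otimes>\<^bsub>AP3\<^esub> b = b \<otimes>\<^bsub>AP3\<^esub> a"
      unfolding a_def b_def pres_gen_def AP3_def pg_mult class_eq_iff
      by (simp, rule swap_word) (simp add: P3_relators_def)
    show "b \<otimes>\<^bsub>AP3\<^esub> c = c \<otimes>\<^bsub>AP3\<^esub> b"
      unfolding c_def b_def pres_gen_def AP3_def pg_mult class_eq_iff
      by (simp, rule swap_word) (simp add: P3_relators_def)
    show "group.ishom AP3 (Exs Ga)" "group.ishom AP3 (Exs Gb)" "group.ishom AP3 (Exs Gc)"
      by (rule AP3_ishom)+
      show "Exs Ga a = 1" "Exs Ga b = 0" "Exs Ga c = 0" "Exs Gb a = 0" "Exs Gb b = 1" "Exs Gb c = 0"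
       "Exs Gc a = 0" "Exs Gc b = 0" "Exs Gc c = 1"
      unfolding a_def b_def c_def exs by simp_all
  qed
  show ?thesis by (rule main_abstract)
qed


end
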